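(* Let $X\subset\mathbb{R}^2$ be a set in convex position. Then $$\mathcal{M}_X=\bigcap\{\mathcal{M}_Y : Y\subset X,\ \#Y=3\}.$$
   Context: A set $S\subset\mathbb{R}^2$ is in convex position if every point of $S$ lies on the boundary of $\mathrm{conv}(S)$. For a point set $X\subset\mathbb{R}^2$ and a point $O$, $X_O=2O-X$ is the reflection of $X$ in $O$. The point $O$ is an admissible center for $X$ if $X\cup X_O$ is in convex position; $\mathcal{M}_X$ denotes the set of all admissible centers for $X$. (Note $X$ is in c.s.c. position, i.e. contained in the boundary of a centrally symmetric convex body, iff $\mathcal{M}_X\neq\emptyset$.) *)

theory Defs
  imports "HOL-Analysis.Analysis"
begin

definition convex_position :: "(real^2) set \<Rightarrow> bool" where
  "convex_position S \<longleftrightarrow> S \<subseteq> frontier (convex hull S)"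

definition reflect_set :: "real^2 \<Rightarrow> (real^2) set \<Rightarrow> (real^2) set" where
  "reflect_set c X = (\<lambda>x. 2 *\<^sub>R c - x) ` X"

definition admissible_centers :: "(real^2) set \<Rightarrow> (real^2) set" where
  "admissible_centers X = {c. convex_position (X \<union> reflect_set c X)}"

end

theory Submission
  imports Defs
begin


lemma cover1d:
  fixes \<alpha> \<beta> :: "'i \<Rightarrow> real"
  assumes cov: "\<forall>t. \<exists>i\<in>I. \<alpha> i + \<beta> i * t > 0" and i0: "i0\<in>I" "\<beta> i0 > 0" and i1: "i1\<in>I" "\<beta> i1 < 0"
  shows "(\<exists>i\<in>I. \<beta> i = 0 \<and> \<alpha> i > 0) \<or> (\<exists>i\<in>I. \<exists>j\<in>I. \<beta> i > 0 \<and> \<beta> j < 0 \<and> (\<forall>t. \<alpha> i + \<beta> i * t > 0 \<or> \<alpha> j + \<beta> j * t > 0))"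
proof (rule ccontr)
  assume neg: "\<not> ?thesis"
  define U where "U = {-\<alpha> i/\<beta> i | i. i\<in>I \<and> \<beta> i > 0}"
  define D where "D = {-\<alpha> j/\<beta> j | j. j \<in> I \<and> \<beta> j < 0}"
  have up: "\<alpha> i + \<beta> i * t > 0" if "\<beta> i > 0" "t > -\<alpha> i/\<beta> i" for i t
    using that by (simp add: field_simps)
  have down: "\<alpha> i + \<beta> i * t > 0" if "\<beta> i < 0" "t < -\<alpha> i/\<beta> i" for i t
    using that by (simp add: field_simps)
  have key: "b \<le> a" if ab: "a\<in>U" "b\<in>D" for a b
  proof (rule ccontr)
    assume "\<not> b \<le> a"
    obtain i j where ij: "i\<in>I" "\<beta> i > 0" "a = -\<alpha> i/\<beta> i" "j\<in>I" "\<beta> j < 0" "b = -\<alpha> j/\<beta> j"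
      using ab U_def D_def by auto
    have "\<forall>t. \<alpha> i + \<beta> i * t > 0 \<or> \<alpha> j + \<beta> j * t > 0"
    proof
      fix t
      show "\<alpha> i + \<beta> i * t > 0 \<or> \<alpha> j + \<beta> j * t > 0"
      proof (cases "t > a")
        case True thus ?thesis using up[of i t] ij by auto
      next
        case False thus ?thesis using down[of j t] ij \<open>\<not> b \<le> a\<close> by auto
      qed
    qed
    thus False using neg ij by blast
  qed
  have Un: "U \<noteq> {}" using i0 U_def by auto
  have Dn: "-\<alpha> i1/\<beta> i1 \<in> D" using i1 D_def by auto
  have bb: "bdd_below U" using key Dn unfolding bdd_below_def by blast
  define m where "m = Inf U"
  have mD: "b \<le> m" if "b \<in> D" for b
    unfolding m_def using Un key that by (intro cInf_greatest) auto
  obtain i where i: "i\<in>I" "\<alpha> i + \<beta> i * m > 0" using cov by blast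
  consider "\<beta> i > 0" | "\<beta> i < 0" | "\<beta> i = 0" by linarith
  then show False
  proof cases
    case 1
    then have "-\<alpha> i/\<beta> i \<in> U" using i U_def by auto
    then have "m \<le> -\<alpha> i/\<beta> i" unfolding m_def using bb by (rule cInf_lower)
    then have "\<beta> i * m \<le> - \<alpha> i" using 1 by (simp add: field_simps)
    then show False using i by linarith
  next
    case 2
    then have "-\<alpha> i/\<beta> i \<in> D" using i D_def by auto
    then have "-\<alpha> i/\<beta> i \<le> m" by (rule mD)
    then have "\<beta> i * m \<le> - \<alpha> i" using 2 by (simp add: field_simps)
    then show False using i by linarith
  next
    case 3 then show False using neg i by auto
  qed
qed



lemma inner2: "(x::real^2) \<bullet> y = x$1*y$1 + x$2*y$2"
  by (simp add: inner_vec_def sum_2)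

lemma zero2: "((x::real^2) = 0) \<longleftrightarrow> x$1 = 0 \<and> x$2 = 0"
  by (simp add: vec_eq_iff forall_2)

definition good :: "real^2 \<Rightarrow> real^2 \<Rightarrow> real^2 \<Rightarrow> real^2 \<Rightarrow> bool" where
  "good c p v y \<longleftrightarrow> v \<bullet> y > v \<bullet> p \<or> v \<bullet> (2 *\<^sub>R c - y) > v \<bullet> p"

lemma good_alt: "good c p v y \<longleftrightarrow> v \<bullet> (y - c) > v \<bullet> (p - c) \<or> - (v \<bullet> (y - c)) > v \<bullet> (p - c)"
  unfolding good_def by (auto simp: inner_diff_right inner_scaleR_right)

lemma ident2:
  fixes v q d :: "real^2"
  shows "(q \<bullet> q) * (v \<bullet> d) = (v \<bullet> q) * (q \<bullet> d) + (v \<bullet> (vector [-(q$2), q$1])) * ((vector [-(q$2), q$1]) \<bullet> d)"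
  by (simp add: inner2 algebra_simps)

lemma lin2:
  fixes v1 v2 a1 a2 b1 b2 :: real
  assumes h1: "v1*a1 + v2*a2 = 0" and h2: "v1*b1+v2*b2 = 0" and h3: "-a2*b1 + a1*b2 \<noteq> 0"
  shows "v1 = 0 \<and> v2 = 0"
proof -
  have "v1 * (-a2*b1 + a1*b2) = -a2*(v1*b1) + b2*(v1*a1)" by algebra
  also have "\<dots> = 0" using h1 h2 by (simp add: eq_neg_iff_add_eq_0 [symmetric] algebra_simps)
  finally have "v1 = 0" using h3 by simp
  have "v2 = 0"
  proof (rule ccontr)
    assume "v2 \<noteq> 0"
    moreover have "v2*a2 = 0" "v2*b2 = 0" using h1 h2 \<open>v1 = 0\<close> by auto
    ultimately show False using h3 by simp
  qed
  with \<open>v1 = 0\<close> show ?thesis by simp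
qed

lemma interior_strict:
  fixes S :: "(real^2) set"
  assumes z: "z \<in> interior (convex hull S)" and v: "v \<noteq> 0"
  shows "\<exists>s\<in>S. v \<bullet> s > v \<bullet> z"
proof (rule ccontr)
  assume "\<not> ?thesis"
  then have "S \<subseteq> {x. v \<bullet> x \<le> v \<bullet> z}" by auto
  then have H: "convex hull S \<subseteq> {x. v \<bullet> x \<le> v \<bullet> z}"
    by (intro hull_minimal) (auto simp: convex_halfspace_le)
  obtain e where e: "e > 0" "ball z e \<subseteq> convex hull S" using z mem_interior by blast
  define w where "w = z + (e / (2 * norm v)) *\<^sub>R v"
  have nv: "norm v > 0" using v by simp
  have "dist z w = e/2" using nv e by (simp add: w_def dist_norm)
  then have "w \<in> convex hull S" using e by auto
  then have "v \<bullet> w \<le> v \<bullet> z" using H by auto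
  moreover have "v \<bullet> w = v \<bullet> z + (e / (2 * norm v)) * (v \<bullet> v)"
    by (simp add: w_def inner_add_right)
  moreover have "(e / (2 * norm v)) * (v \<bullet> v) > 0" using nv e v by simp
  ultimately show False by linarith
qed

lemma strict_interior:
  fixes T :: "(real^2) set"
  assumes fin: "finite T" and H: "\<forall>v. v \<noteq> 0 \<longrightarrow> (\<exists>t\<in>T. v \<bullet> t > v \<bullet> p)"
  shows "p \<in> interior (convex hull T)"
proof (rule ccontr)
  assume np: "p \<notin> interior (convex hull T)"
  let ?K = "convex hull T"
  have cK: "compact ?K" using fin by (rule finite_imp_compact_convex_hull)
  have K: "convex ?K" "closed ?K" using cK compact_imp_closed by auto
  have TK: "T \<subseteq> ?K" by (rule hull_subset)
  show False
  proof (cases "p \<in> ?K")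
    case False
    then obtain a b where ab: "a \<bullet> p < b" "\<forall>x\<in>?K. a \<bullet> x > b"
      using separating_hyperplane_closed_point[OF K False] by blast
    obtain t0 where "t0 \<in> T" using H[rule_format, of 1] by auto
    have "a \<noteq> 0" using ab \<open>t0 \<in> T\<close> TK by auto
    then obtain t where "t\<in>T" "(-a) \<bullet> t > (-a) \<bullet> p" using H by (metis neg_equal_0_iff_equal)
    then show False using ab TK by force
  next
    case pK: True
    show False
    proof (cases "interior ?K = {}")
      case True
      obtain a b where ab: "a \<noteq> 0" "?K \<subseteq> {x. a \<bullet> x = b}"
        using empty_interior_subset_hyperplane[OF K(1) True] by blast
      then obtain t where "t\<in>T" "a \<bullet> t > a \<bullet> p" using H by blast
      moreover have "a \<bullet> t = b" "a \<bullet> p = b" using ab TK pK \<open>t\<in>T\<close> by blast+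
      ultimately show False by linarith
    next
      case False
      then have ri: "rel_interior ?K = interior ?K" by (rule rel_interior_nonempty_interior)
      have "p \<in> closure ?K" using pK closure_subset by blast
      then obtain a where a: "a \<noteq> 0" "\<And>y. y \<in> closure ?K \<Longrightarrow> a \<bullet> p \<le> a \<bullet> y"
        using supporting_hyperplane_relative_frontier[OF K(1)] np ri by metis
      then obtain t where "t\<in>T" "(-a) \<bullet> t > (-a) \<bullet> p" using H by (metis neg_equal_0_iff_equal)
      moreover have "t \<in> closure ?K" using \<open>t\<in>T\<close> TK closure_subset by blast
      ultimately show False using a by force
    qed
  qed
qed



lemma good_center: "p = c \<Longrightarrow> good c p v y \<longleftrightarrow> v \<bullet> (y - c) \<noteq> 0"
  unfolding good_alt by auto

lemma finalF:
  fixes p c a b :: "real^2"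
  defines "q \<equiv> p - c"
  defines "r \<equiv> (vector [-(q$2), q$1] :: real^2)"
  assumes q: "q \<noteq> 0" and ra: "r \<bullet> (a - c) \<noteq> 0"
    and cov: "\<forall>t. good c p (q + t *\<^sub>R r) a \<or> good c p (q + t *\<^sub>R r) b"
  shows "\<forall>v. v \<noteq> 0 \<longrightarrow> good c p v p \<or> good c p v a \<or> good c p v b"
proof (intro allI impI)
  fix v :: "real^2" assume v: "v \<noteq> 0"
  define N where "N = q \<bullet> q"
  have N: "N > 0" using q N_def by simp
  have rq: "r \<bullet> q = 0" by (simp add: r_def inner2 algebra_simps)
  have id: "N * (v \<bullet> d) = (v \<bullet> q) * (q \<bullet> d) + (v \<bullet> r) * (r \<bullet> d)" for d
    unfolding N_def r_def by (rule ident2)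
  consider "v \<bullet> q < 0" | "v \<bullet> q = 0" | "v \<bullet> q > 0" by linarith
  then show "good c p v p \<or> good c p v a \<or> good c p v b"
  proof cases
    case 1 then show ?thesis by (simp add: good_alt q_def)
  next
    case 2
    have "v \<bullet> r \<noteq> 0"
    proof
      assume "v \<bullet> r = 0"
      have "v$1 = 0 \<and> v$2 = 0"
      proof (rule lin2[of _ "q$1" _ "q$2" "r$1" "r$2"])
        show "v$1 * q$1 + v$2 * q$2 = 0" using 2 by (simp add: inner2)
        show "v$1 * r$1 + v$2 * r$2 = 0" using \<open>v \<bullet> r = 0\<close> by (simp add: inner2)
        have "- q$2 * r$1 + q$1 * r$2 = N" by (simp add: r_def N_def inner2 power2_eq_square)
        then show "- q$2 * r$1 + q$1 * r$2 \<noteq> 0" using N by simp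
      qed
      then show False using v zero2 by blast
    qed
    then have "N * (v \<bullet> (a - c)) \<noteq> 0" using id[of "a - c"] 2 ra by simp
    then have "v \<bullet> (a - c) \<noteq> 0" by simp
    then have "good c p v a" using 2 by (auto simp: good_alt q_def)
    then show ?thesis by simp
  next
    case 3
    define s where "s = v \<bullet> q"
    define w where "w = v \<bullet> r"
    define t where "t = w / s"
    have s: "s > 0" using 3 s_def by simp
    have imp: "good c p v y" if gy: "good c p (q + t *\<^sub>R r) y" for y
    proof -
      define d where "d = y - c"
      define X where "X = q \<bullet> d + t * (r \<bullet> d)"
      have uy: "(q + t *\<^sub>R r) \<bullet> d = X" by (simp add: X_def inner_add_left)
      have uq: "(q + t *\<^sub>R r) \<bullet> q = N" by (simp add: N_def inner_add_left rq)
      have gX: "X > N \<or> - X > N" using gy uy uq by (simp add: good_alt d_def q_def)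
      have NX: "N * (v \<bullet> d) = s * X"
        using id[of d] s by (simp add: X_def t_def s_def w_def field_simps)
      from gX have "N * (v \<bullet> d) > N * s \<or> - (N * (v \<bullet> d)) > N * s"
      proof
        assume "X > N" then have "s * X > s * N" using s by simp
        then show ?thesis using NX by (simp add: mult.commute)
      next
        assume "- X > N" then have "s * (-X) > s * N" using s by (simp only: mult_less_cancel_left_pos)
        then show ?thesis using NX by (simp add: mult.commute)
      qed
      then have "v \<bullet> d > s \<or> - (v \<bullet> d) > s" using N
        by (metis mult_less_cancel_left_pos mult_minus_right)
      then show ?thesis by (simp add: good_alt d_def s_def q_def)
    qed
    then show ?thesis using cov by blast
  qed
qed



lemma key:
  fixes p c :: "real^2"
  assumes pX: "p \<in> X" and H: "\<forall>v. v \<noteq> 0 \<longrightarrow> (\<exists>x\<in>X. good c p v x)"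
  shows "\<exists>a\<in>X. \<exists>b\<in>X. \<forall>v. v \<noteq> 0 \<longrightarrow> good c p v p \<or> good c p v a \<or> good c p v b"
proof (cases "p = c")
  case True
  define e1 where "e1 = (vector [1, 0] :: real^2)"
  have "e1 \<noteq> 0" by (simp add: e1_def zero2)
  then obtain x0 where x0: "x0 \<in> X" "good c p e1 x0" using H by blast
  define d0 where "d0 = x0 - c"
  have "e1 \<bullet> d0 \<noteq> 0" using x0 True by (simp add: good_center d0_def)
  then have "d0 \<noteq> 0" by auto
  define r0 where "r0 = (vector [-(d0$2), d0$1] :: real^2)"
  have "r0 \<noteq> 0" using \<open>d0 \<noteq> 0\<close> by (auto simp: r0_def zero2)
  then obtain x1 where x1: "x1 \<in> X" "good c p r0 x1" using H by blast
  define d1 where "d1 = x1 - c"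
  have r0d1: "r0 \<bullet> d1 \<noteq> 0" using x1 True by (simp add: good_center d1_def)
  have "\<forall>v. v \<noteq> 0 \<longrightarrow> good c p v p \<or> good c p v x0 \<or> good c p v x1"
  proof (intro allI impI)
    fix v :: "real^2" assume v: "v \<noteq> 0"
    have "v \<bullet> d0 \<noteq> 0 \<or> v \<bullet> d1 \<noteq> 0"
    proof (rule ccontr)
      assume "\<not> ?thesis"
      then have "v$1 = 0 \<and> v$2 = 0"
        using lin2[of "v$1" "d0$1" "v$2" "d0$2" "d1$1" "d1$2"] r0d1
        by (simp add: inner2 r0_def algebra_simps)
      then show False using v zero2 by blast
    qed
    then show "good c p v p \<or> good c p v x0 \<or> good c p v x1"
      using True by (auto simp: good_center d0_def d1_def)
  qed
  then show ?thesis using x0 x1 by blast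
next
  case False
  define q where "q = p - c"
  define r where "r = (vector [-(q$2), q$1] :: real^2)"
  have q: "q \<noteq> 0" using False q_def by simp
  define N where "N = q \<bullet> q"
  have rq: "r \<bullet> q = 0" by (simp add: r_def inner2 algebra_simps)
  have "r \<noteq> 0" using q by (auto simp: r_def zero2)
  then obtain x0 where x0: "x0 \<in> X" "good c p r x0" using H by blast
  have r0: "r \<bullet> (x0 - c) \<noteq> 0" using x0 rq by (auto simp: good_alt q_def)
  define \<alpha> :: "(real^2) \<times> bool \<Rightarrow> real" where
    "\<alpha> = (\<lambda>(x, b). (if b then q \<bullet> (x - c) else - (q \<bullet> (x - c))) - N)"
  define \<beta> :: "(real^2) \<times> bool \<Rightarrow> real" where
    "\<beta> = (\<lambda>(x, b). (if b then r \<bullet> (x - c) else - (r \<bullet> (x - c))))"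
  have gt: "good c p (q + t *\<^sub>R r) x \<longleftrightarrow> \<alpha> (x, True) + \<beta> (x, True) * t > 0 \<or> \<alpha> (x, False) + \<beta> (x, False) * t > 0" for x t
  proof -
    have uq: "(q + t *\<^sub>R r) \<bullet> q = N" by (simp add: N_def inner_add_left rq)
    have ux: "(q + t *\<^sub>R r) \<bullet> (x - c) = q \<bullet> (x - c) + t * (r \<bullet> (x - c))" by (simp add: inner_add_left)
    show ?thesis unfolding good_alt q_def[symmetric] uq ux by (simp add: \<alpha>_def \<beta>_def algebra_simps)
  qed
  have qtr: "q + t *\<^sub>R r \<noteq> 0" for t
  proof
    assume "q + t *\<^sub>R r = 0"
    then have "(q + t *\<^sub>R r) \<bullet> q = 0" by simp
    then have "N = 0" by (simp add: N_def inner_add_left rq)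
    then show False using q N_def by simp
  qed
  let ?I = "X \<times> (UNIV :: bool set)"
  have cov: "\<forall>t. \<exists>i\<in>?I. \<alpha> i + \<beta> i * t > 0"
  proof
    fix t
    obtain x where "x \<in> X" "good c p (q + t *\<^sub>R r) x" using H qtr by blast
    then show "\<exists>i\<in>?I. \<alpha> i + \<beta> i * t > 0" using gt by blast
  qed
  obtain i0 i1 where i01: "i0 \<in> ?I" "\<beta> i0 > 0" "i1 \<in> ?I" "\<beta> i1 < 0"
  proof (cases "r \<bullet> (x0 - c) > 0")
    case True
    show ?thesis by (rule that[of "(x0, True)" "(x0, False)"]) (use x0 True in \<open>auto simp: \<beta>_def\<close>)
  next
    case False
    then have "r \<bullet> (x0 - c) < 0" using r0 by simp
    show ?thesis by (rule that[of "(x0, False)" "(x0, True)"]) (use x0 \<open>r \<bullet> (x0 - c) < 0\<close> in \<open>auto simp: \<beta>_def\<close>)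
  qed
  have fF: "\<forall>v. v \<noteq> 0 \<longrightarrow> good c p v p \<or> good c p v a \<or> good c p v b"
    if "r \<bullet> (a - c) \<noteq> 0" "\<forall>t. good c p (q + t *\<^sub>R r) a \<or> good c p (q + t *\<^sub>R r) b" for a b
    using finalF[of p c a b] that q unfolding q_def r_def by blast
  from cover1d[OF cov i01]
  show ?thesis
  proof
    assume "\<exists>i\<in>?I. \<beta> i = 0 \<and> \<alpha> i > 0"
    then obtain x1 b1 where x1: "x1 \<in> X" "\<beta> (x1, b1) = 0" "\<alpha> (x1, b1) > 0" by auto
    have "\<forall>t. good c p (q + t *\<^sub>R r) x0 \<or> good c p (q + t *\<^sub>R r) x1"
    proof
      fix t
      have "\<alpha> (x1, b1) + \<beta> (x1, b1) * t > 0" using x1 by simp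
      then have "good c p (q + t *\<^sub>R r) x1" using gt by (cases b1) auto
      then show "good c p (q + t *\<^sub>R r) x0 \<or> good c p (q + t *\<^sub>R r) x1" by simp
    qed
    then show ?thesis using fF[OF r0] x0 x1 by blast
  next
    assume "\<exists>i\<in>?I. \<exists>j\<in>?I. \<beta> i > 0 \<and> \<beta> j < 0 \<and> (\<forall>t. \<alpha> i + \<beta> i * t > 0 \<or> \<alpha> j + \<beta> j * t > 0)"
    then obtain x1 b1 x2 b2 where xs: "x1 \<in> X" "x2 \<in> X" "\<beta> (x1, b1) > 0"
      "\<forall>t. \<alpha> (x1,b1) + \<beta> (x1,b1) * t > 0 \<or> \<alpha> (x2,b2) + \<beta> (x2,b2) * t > 0" by auto
    have r1: "r \<bullet> (x1 - c) \<noteq> 0" using xs(3) by (cases b1) (auto simp: \<beta>_def)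
    have "\<forall>t. good c p (q + t *\<^sub>R r) x1 \<or> good c p (q + t *\<^sub>R r) x2"
    proof
      fix t
      have a1: "\<alpha> (x1, b1) + \<beta> (x1, b1) * t > 0 \<Longrightarrow> good c p (q + t *\<^sub>R r) x1" using gt by (cases b1) auto
      have a2: "\<alpha> (x2, b2) + \<beta> (x2, b2) * t > 0 \<Longrightarrow> good c p (q + t *\<^sub>R r) x2" using gt by (cases b2) auto
      show "good c p (q + t *\<^sub>R r) x1 \<or> good c p (q + t *\<^sub>R r) x2" using xs(4) a1 a2 by blast
    qed
    then show ?thesis using fF[OF r1] xs by blast
  qed
qed



lemma twofail: "\<exists>v. v \<noteq> 0 \<and> \<not> good c p v p \<and> \<not> good c p v e"
proof -
  define d where "d = e - c"
  define w where "w = (if d = 0 then vector [1,0] else vector [-(d$2), d$1] :: real^2)"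
  have w0: "w \<noteq> 0" 
  proof (cases "d = 0")
    case True then show ?thesis by (simp add: w_def zero2)
  next
    case False then show ?thesis unfolding w_def zero2 by (auto simp: zero2)
  qed
  have wd: "w \<bullet> d = 0"
  proof (cases "d = 0")
    case True then show ?thesis by (simp add: w_def)
  next
    case False then show ?thesis unfolding w_def by (simp add: inner2 algebra_simps)
  qed
  define v where "v = (if w \<bullet> (p - c) \<ge> 0 then w else - w)"
  have "v \<noteq> 0" "v \<bullet> d = 0" "v \<bullet> (p - c) \<ge> 0" using w0 wd by (auto simp: v_def)
  then show ?thesis by (intro exI[of _ v]) (auto simp: good_alt d_def)
qed

lemma cp_subset:
  assumes A: "convex_position S" and B: "S' \<subseteq> S"
  shows "convex_position S'"
  unfolding convex_position_def
proof
  fix x assume x: "x \<in> S'"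
  have xS: "x \<in> frontier (convex hull S)" using A B x unfolding convex_position_def by blast
  have "x \<in> convex hull S'" using x by (rule hull_inc)
  then have "x \<in> closure (convex hull S')" using closure_subset by blast
  moreover have "interior (convex hull S') \<subseteq> interior (convex hull S)"
    by (intro interior_mono hull_mono B)
  ultimately show "x \<in> frontier (convex hull S')" using xS unfolding frontier_def by blast
qed

lemma refl_mono: "Y \<subseteq> X \<Longrightarrow> reflect_set c Y \<subseteq> reflect_set c X"
  unfolding reflect_set_def by auto

theorem mainTheorem5:
  fixes X :: "(real^2) set"
  assumes "convex_position X"
  shows "admissible_centers X = \<Inter> {admissible_centers Y | Y. Y \<subseteq> X \<and> card Y = 3}"
proof
  show "admissible_centers X \<subseteq> \<Inter> {admissible_centers Y | Y. Y \<subseteq> X \<and> card Y = 3}"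
  proof (safe)
    fix c Y assume c: "c \<in> admissible_centers X" and Y: "Y \<subseteq> X"
    have "Y \<union> reflect_set c Y \<subseteq> X \<union> reflect_set c X" using Y refl_mono by blast
    then show "c \<in> admissible_centers Y" using c cp_subset unfolding admissible_centers_def by blast
  qed
next
  show "\<Inter> {admissible_centers Y | Y. Y \<subseteq> X \<and> card Y = 3} \<subseteq> admissible_centers X"
  proof
    fix c assume c: "c \<in> \<Inter> {admissible_centers Y | Y. Y \<subseteq> X \<and> card Y = 3}"
    then have cY: "c \<in> admissible_centers Y" if "Y \<subseteq> X" "card Y = 3" for Y using that by blast
    let ?S = "X \<union> reflect_set c X"
    show "c \<in> admissible_centers X"
      unfolding admissible_centers_def mem_Collect_eq
    proof (rule ccontr)
      assume "\<not> convex_position ?S"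
      then obtain z where z: "z \<in> ?S" "z \<notin> frontier (convex hull ?S)"
        unfolding convex_position_def by blast
      have "z \<in> convex hull ?S" using z(1) by (rule hull_inc)
      then have "z \<in> closure (convex hull ?S)" using closure_subset by blast
      then have zi: "z \<in> interior (convex hull ?S)" using z(2) by (simp add: frontier_def)
      have zs: "\<forall>v. v \<noteq> 0 \<longrightarrow> (\<exists>s\<in>?S. v \<bullet> s > v \<bullet> z)"
        using interior_strict[OF zi] by blast
      obtain p where pX: "p \<in> X" and pH: "\<forall>v. v \<noteq> 0 \<longrightarrow> (\<exists>x\<in>X. good c p v x)"
      proof (cases "z \<in> X")
        case True
        show ?thesis
        proof (rule that[OF True], intro allI impI)
          fix v :: "real^2" assume "v \<noteq> 0"
          then obtain s where "s \<in> ?S" "v \<bullet> s > v \<bullet> z" using zs by blast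
          then show "\<exists>x\<in>X. good c z v x" unfolding reflect_set_def good_def by auto
        qed
      next
        case False
        then obtain p where p: "p \<in> X" "z = 2 *\<^sub>R c - p" using z(1) unfolding reflect_set_def by auto
        show ?thesis
        proof (rule that[OF p(1)], intro allI impI)
          fix v :: "real^2" assume "v \<noteq> 0"
          then have "-v \<noteq> 0" by simp
          then obtain s where s: "s \<in> ?S" "(-v) \<bullet> s > (-v) \<bullet> z" using zs by blast
          show "\<exists>x\<in>X. good c p v x"
          proof (cases "s \<in> X")
            case True
            then show ?thesis using s p
              by (intro bexI[of _ s]) (auto simp: good_def inner_diff_right)
          next
            case False
            then obtain x where x: "x \<in> X" "s = 2 *\<^sub>R c - x" using s(1) unfolding reflect_set_def by auto
            then show ?thesis using s p
              by (intro bexI[of _ x]) (auto simp: good_def inner_diff_right)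
          qed
        qed
      qed
      obtain a b where ab: "a \<in> X" "b \<in> X"
        and G: "\<forall>v. v \<noteq> 0 \<longrightarrow> good c p v p \<or> good c p v a \<or> good c p v b"
        using key[OF pX pH] by blast
      have nsub: False if eq: "a = p \<or> b = p \<or> a = b"
      proof -
        have "\<exists>e. \<forall>v. v \<noteq> 0 \<longrightarrow> good c p v p \<or> good c p v e"
        proof (cases "a = p")
          case True then show ?thesis using G by blast
        next
          case False
          then have "b = p \<or> a = b" using eq by blast
          then show ?thesis using G by blast
        qed
        then obtain e where e: "\<forall>v. v \<noteq> 0 \<longrightarrow> good c p v p \<or> good c p v e" by blast
        obtain v where "v \<noteq> 0" "\<not> good c p v p" "\<not> good c p v e" using twofail by blast
        then show False using e by blast
      qed
      define Y where "Y = {p, a, b}"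
      have "a \<noteq> p" "b \<noteq> p" "a \<noteq> b" using nsub by blast+
      then have cardY: "card Y = 3" by (simp add: Y_def)
      have YX: "Y \<subseteq> X" using pX ab Y_def by auto
      have cpY: "convex_position (Y \<union> reflect_set c Y)"
        using cY[OF YX cardY] unfolding admissible_centers_def by simp
      let ?T = "Y \<union> reflect_set c Y"
      have fT: "finite ?T" by (simp add: Y_def reflect_set_def)
      have TH: "\<forall>v. v \<noteq> 0 \<longrightarrow> (\<exists>t\<in>?T. v \<bullet> t > v \<bullet> p)"
      proof (intro allI impI)
        fix v :: "real^2" assume "v \<noteq> 0"
        then obtain y where "y \<in> Y" "good c p v y" using G Y_def by blast
        then show "\<exists>t\<in>?T. v \<bullet> t > v \<bullet> p" unfolding good_def reflect_set_def by auto
      qed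
      have "p \<in> interior (convex hull ?T)" by (rule strict_interior[OF fT TH])
      moreover have "p \<in> frontier (convex hull ?T)" using cpY unfolding convex_position_def Y_def by blast
      ultimately show False by (simp add: frontier_def)
    qed
  qed
qed


end
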